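(* (i) For every $k\ge2$, $\alpha\in(1,2)$, $p\in(0,1)$ there exists $C^{\alpha,p}_{5,k}>0$ such that for all $n\in\mathbb{N}$ and $t\in\mathbb{R}$, $\big|\frac{\mathrm{d}R^{\alpha,p}_{n,1,k}(t)}{\mathrm{d}t}\big|\le C^{\alpha,p}_{5,k}|t|^{k-1}/n^{(k-\alpha)/\alpha}$. (ii) Let $\alpha\in(1,2)$, $p\in(0,1)$, and let $C_2>0$ be a constant such that $|x_n^{\alpha,p}(t)|/n\le\frac12$ for all $n\in\mathbb{N}$ and $|t|\le C_2n^{1/\alpha}$. Then there exists $C_5^{\alpha,p}>0$ such that for all $n\in\mathbb{N}$ and $|t|\le C_2n^{1/\alpha}$, $\big|\frac{\mathrm{d}x_n^{\alpha,p}(t)}{\mathrm{d}t}\big|\le C_5^{\alpha,p}n^{(\alpha-1)/\alpha}$.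
   Context: Let $p\in(0,1)$, $q=1-p$, $r=1/q$, $\alpha\in(1,2)$. Let $\mathbf{f}_{\alpha,p}(t)=\sum_{k\ge1}e^{\mathrm{i}tr^{k/\alpha}}q^{k-1}p$ and $x_n^{\alpha,p}(t)=n(\mathbf{f}_{\alpha,p}(t/n^{1/\alpha})-1)$ (differentiable since $\alpha>1$; a constant $C_2$ as in (ii) exists). Let $\gamma_n=n/r^{\lceil\log_rn\rceil}$ and for $k\ge2$ \[R^{\alpha,p}_{n,1,k}(t)=-\sum_{m=\lceil\log_rn\rceil}^\infty\Big(\exp\Big\{\frac{\mathrm{i}t}{r^{m/\alpha}\gamma_n^{1/\alpha}}\Big\}-\sum_{j=0}^{k-1}\frac{(\mathrm{i}t)^j}{j!\,r^{jm/\alpha}\gamma_n^{j/\alpha}}\Big)\frac{p\gamma_n}{q}r^m,\] which is differentiable in $t$. *)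

theory Defs
  imports "HOL-Analysis.Analysis"
begin

text \<open>q = 1 - p, r = 1/q.\<close>

definition f_ap :: "real \<Rightarrow> real \<Rightarrow> real \<Rightarrow> complex" where
  "f_ap \<alpha> p t = (\<Sum>k. exp (\<i> * of_real (t * (1 / (1 - p)) powr (real (Suc k) / \<alpha>)))
                      * of_real ((1 - p) ^ k * p))"

definition x_ap :: "real \<Rightarrow> real \<Rightarrow> nat \<Rightarrow> real \<Rightarrow> complex" where
  "x_ap \<alpha> p n t = of_nat n * (f_ap \<alpha> p (t / real n powr (1 / \<alpha>)) - 1)"

text \<open>The index \<lceil>log_r n\<rceil> (nonnegative for n \<ge> 1).\<close>
definition M_p :: "real \<Rightarrow> nat \<Rightarrow> nat" where
  "M_p p n = nat \<lceil>log (1 / (1 - p)) (real n)\<rceil>"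

definition gamma_p :: "real \<Rightarrow> nat \<Rightarrow> real" where
  "gamma_p p n = real n / (1 / (1 - p)) ^ M_p p n"

definition R_ap :: "real \<Rightarrow> real \<Rightarrow> nat \<Rightarrow> nat \<Rightarrow> real \<Rightarrow> complex" where
  "R_ap \<alpha> p n k t = - (\<Sum>j. (let m = j + M_p p n;
        r = 1 / (1 - p);
        s = r powr (real m / \<alpha>) * gamma_p p n powr (1 / \<alpha>) in
        (exp (\<i> * of_real (t / s))
          - (\<Sum>i<k. (\<i> * of_real t) ^ i / (of_real (fact i) * of_real (s ^ i))))
        * of_real (p * gamma_p p n / (1 - p) * r ^ m)))"

end

theory Submission
  imports Defs "HOL-Probability.Characteristic_Functions"
begin


lemma vd_series:
  fixes f :: "nat \<Rightarrow> real \<Rightarrow> 'b::banach"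
  assumes S: "open S" "convex S" "x \<in> S"
   and der: "\<And>n y. y\<in>S \<Longrightarrow> (f n has_vector_derivative d n y) (at y)"
   and bd: "\<And>n y. y \<in> S \<Longrightarrow> norm (d n y) \<le> B n" and sB: "summable B"
   and sf: "\<And>y. y\<in>S \<Longrightarrow> summable (\<lambda>n. f n y)"
  shows "((\<lambda>y. \<Sum>n. f n y) has_vector_derivative (\<Sum>n. d n x)) (at x)"
proof -
  have U: "uniform_limit S (\<lambda>n y. \<Sum>i<n. d i y) (\<lambda>y. \<Sum>i. d i y) sequentially"
    by (rule Weierstrass_m_test[OF bd sB])
  have "\<exists>g. \<forall>y\<in>S. (\<lambda>n. f n y) sums (g y) \<and> (g has_derivative (\<lambda>h. h *\<^sub>R (\<Sum>i. d i y))) (at y within S)"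
  proof (rule has_derivative_series[OF S(2), where f'="\<lambda>n y h. h *\<^sub>R d n y"])
    show "\<And>n y. y \<in> S \<Longrightarrow> (f n has_derivative (\<lambda>h. h *\<^sub>R d n y)) (at y within S)"
      using der by (simp add: has_vector_derivative_def has_derivative_at_withinI)
    show "(\<lambda>n. f n x) sums (\<Sum>n. f n x)" using sf[OF S(3)] by (simp add: summable_sums)
    show "x \<in> S" by fact
    fix e :: real assume e: "e > 0"
    from uniform_limitD[OF U e] show "\<forall>\<^sub>F n in sequentially. \<forall>y\<in>S. \<forall>h. norm ((\<Sum>i<n. h *\<^sub>R d i y) - h *\<^sub>R (\<Sum>i. d i y)) \<le> e * norm h"
    proof (rule eventually_mono)
      fix n assume H: "\<forall>y\<in>S. dist (\<Sum>i<n. d i y) (\<Sum>i. d i y) < e"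
      show "\<forall>y\<in>S. \<forall>h. norm ((\<Sum>i<n. h *\<^sub>R d i y) - h *\<^sub>R (\<Sum>i. d i y)) \<le> e * norm h"
      proof (intro ballI allI)
        fix y h assume y: "y \<in> S"
        have "norm ((\<Sum>i<n. h *\<^sub>R d i y) - h *\<^sub>R (\<Sum>i. d i y)) = \<bar>h\<bar> * norm ((\<Sum>i<n. d i y) - (\<Sum>i. d i y))"
          by (simp add: scaleR_sum_right[symmetric] scaleR_diff_right[symmetric])
        also have "\<dots> \<le> \<bar>h\<bar> * e" using H y by (intro mult_left_mono) (auto simp: dist_norm)
        finally show "norm ((\<Sum>i<n. h *\<^sub>R d i y) - h *\<^sub>R (\<Sum>i. d i y)) \<le> e * norm h" by (simp add: mult.commute)
      qed
    qed
  qed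
  then obtain g where g: "\<And>y. y\<in>S \<Longrightarrow> (\<lambda>n. f n y) sums (g y)"
     "\<And>y. y\<in>S \<Longrightarrow> (g has_derivative (\<lambda>h. h *\<^sub>R (\<Sum>i. d i y))) (at y within S)" by blast
  have "(g has_derivative (\<lambda>h. h *\<^sub>R (\<Sum>i. d i x))) (at x)"
    using g(2)[OF S(3)] at_within_open[OF S(3,1)] by simp
  then have "((\<lambda>y. \<Sum>n. f n y) has_derivative (\<lambda>h. h *\<^sub>R (\<Sum>i. d i x))) (at x)"
    by (rule has_derivative_transform_within_open[OF _ S(1) S(3)]) (use g(1) sums_unique in auto)
  then show ?thesis by (simp add: has_vector_derivative_def)
qed



lemma poly_exp_deriv:
  "((\<lambda>z::complex. \<Sum>i<Suc k. (\<i> * z)^i / fact i) has_field_derivative (\<i> * (\<Sum>i<k. (\<i> * z)^i / fact i))) (at z)"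
proof (induction k)
  case 0 then show ?case by simp
next
  case (Suc k)
  have D: "((\<lambda>z::complex. (\<i> * z)^Suc k / fact (Suc k)) has_field_derivative (of_nat (Suc k) * (\<i> * (\<i> * z)^(Suc k - Suc 0)) / fact (Suc k))) (at z)"
    by (rule DERIV_cdivide, rule DERIV_power, rule DERIV_cmult_Id)
  have "of_nat (Suc k) * (\<i> * (\<i> * z)^(Suc k - Suc 0)) / fact (Suc k) = \<i> * ((\<i> * z)^k / fact k)"
    by (simp add: fact_Suc field_simps del: of_nat_Suc)
  with D have "((\<lambda>z::complex. (\<i> * z)^Suc k / fact (Suc k)) has_field_derivative (\<i> * ((\<i> * z)^k / fact k))) (at z)" by simp
  from DERIV_add[OF Suc this] show ?case by (simp add: algebra_simps)
qed

lemma taylor_term_deriv: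
  fixes s w :: real and k :: nat
  assumes "s > 0" "k \<ge> 1"
  shows "((\<lambda>t. (exp (\<i> * of_real (t / s)) - (\<Sum>i<k. (\<i> * of_real t)^i / (of_real (fact i) * of_real (s^i))))
            * of_real w) has_vector_derivative
          ((exp (\<i> * of_real (t/s)) - (\<Sum>i<k-1. (\<i> * of_real (t/s))^i / fact i)) * (\<i> / of_real s) * of_real w)) (at t)"
proof -
  obtain k' where k: "k = Suc k'" using assms(2) by (cases k) auto
  have eq: "(\<i> * of_real t)^i / (of_real (fact i) * of_real (s^i)) = (\<i> * of_real (t/s))^i / fact i" for t i
    using assms(1) by (simp add: power_divide power_mult_distrib field_simps)
  let ?z = "of_real t :: complex"
  have dz: "((\<lambda>z. z / of_real s) has_field_derivative (1 / of_real s)) (at ?z)"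
    using DERIV_cdivide[OF DERIV_ident, where c="of_real s" and x="?z" and s=UNIV] by simp
  have P: "((\<lambda>z. \<Sum>i<Suc k'. (\<i> * (z / of_real s))^i / fact i) has_field_derivative
       (\<i> * (\<Sum>i<k'. (\<i> * (?z / of_real s))^i / fact i)) * (1 / of_real s)) (at ?z)"
    by (rule DERIV_chain2[OF poly_exp_deriv dz])
  have E: "((\<lambda>z. exp (\<i> * (z / of_real s))) has_field_derivative exp (\<i> * (?z / of_real s)) * (\<i> * (1 / of_real s))) (at ?z)"
    by (rule DERIV_chain2[OF DERIV_exp], rule DERIV_cmult, rule dz)
  have "((\<lambda>z. (exp (\<i> * (z / of_real s)) - (\<Sum>i<Suc k'. (\<i> * (z / of_real s))^i / fact i)) * of_real w)
        has_field_derivative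
        (exp (\<i> * (?z / of_real s)) * (\<i> * (1 / of_real s)) - (\<i> * (\<Sum>i<k'. (\<i> * (?z / of_real s))^i / fact i)) * (1 / of_real s)) * of_real w) (at ?z)"
    by (rule DERIV_cmult_right, rule DERIV_diff[OF E P])
  from has_vector_derivative_real_field[OF this, where s=UNIV]
  have H: "((\<lambda>x. (exp (\<i> * (of_real x / of_real s)) - (\<Sum>i<Suc k'. (\<i> * (of_real x / of_real s))^i / fact i)) * of_real w)
        has_vector_derivative
        (exp (\<i> * (?z / of_real s)) * (\<i> * (1 / of_real s)) - (\<i> * (\<Sum>i<k'. (\<i> * (?z / of_real s))^i / fact i)) * (1 / of_real s)) * of_real w) (at t)"
    by simp
  have F: "(\<lambda>t. (exp (\<i> * of_real (t / s)) - (\<Sum>i<k. (\<i> * of_real t)^i / (of_real (fact i) * of_real (s^i))))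
            * of_real w) = (\<lambda>x. (exp (\<i> * (of_real x / of_real s)) - (\<Sum>i<Suc k'. (\<i> * (of_real x / of_real s))^i / fact i)) * of_real w)"
    by (rule ext) (simp only: eq k of_real_divide)
  have G: "(exp (\<i> * (?z / of_real s)) * (\<i> * (1 / of_real s)) - (\<i> * (\<Sum>i<k'. (\<i> * (?z / of_real s))^i / fact i)) * (1 / of_real s)) * of_real w
     = (exp (\<i> * of_real (t/s)) - (\<Sum>i<k-1. (\<i> * of_real (t/s))^i / fact i)) * (\<i> / of_real s) * of_real w"
    by (simp add: k algebra_simps)
  show ?thesis using H unfolding F G .
qed



lemma ratio_eq:
  fixes r g p \<alpha> :: real
  assumes r: "r > 0" and g: "g > 0" and a: "\<alpha> > 0"
  shows "(p*g/(1-p) * r^m) / (r powr (real m/\<alpha>) * g powr (1/\<alpha>))^k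
       = p/(1-p) * g powr (1 - k/\<alpha>) * (r powr (1 - k/\<alpha>))^m"
proof -
  have 1: "(r powr (real m/\<alpha>) * g powr (1/\<alpha>))^k = r powr (real k * (real m/\<alpha>)) * g powr (real k * (1/\<alpha>))"
    using r g by (simp add: power_mult_distrib powr_power)
  have 2: "r^m = r powr real m" using r by (simp add: powr_realpow)
  have 3: "(r powr (1 - k/\<alpha>))^m = r powr (real m * (1 - k/\<alpha>))" using r by (simp add: powr_power)
  have 4: "g / g powr (real k * (1/\<alpha>)) = g powr (1 - k/\<alpha>)" using g by (simp add: powr_diff)
  have 5: "r powr real m / r powr (real k * (real m/\<alpha>)) = r powr (real m * (1 - k/\<alpha>))"
    using r by (simp add: powr_diff[symmetric] algebra_simps)
  have "(p*g/(1-p) * r^m) / (r powr (real m/\<alpha>) * g powr (1/\<alpha>))^k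
      = p/(1-p) * (g / g powr (real k * (1/\<alpha>))) * (r powr real m / r powr (real k * (real m/\<alpha>)))"
    unfolding 1 2 by (simp add: field_simps)
  also have "\<dots> = p/(1-p) * g powr (1 - k/\<alpha>) * (r powr (1 - k/\<alpha>))^m" unfolding 4 5 3 ..
  finally show ?thesis .
qed

lemma part1:
  assumes k: "k \<ge> 2" and a: "1 < \<alpha>" "\<alpha> < 2" and p: "0 < p" "p < 1"
  shows "\<exists>C>0. \<forall>n t. n \<ge> 1 \<longrightarrow>
               norm (vector_derivative (R_ap \<alpha> p n k) (at t))
                 \<le> C * \<bar>t\<bar> ^ (k - 1) / real n powr ((real k - \<alpha>) / \<alpha>)"
proof -
  define r where "r = 1 / (1 - p)"
  have r1: "r > 1" using p by (simp add: r_def)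
  define \<rho> where "\<rho> = r powr (1 - k/\<alpha>)"
  have e: "1 - k/\<alpha> < 0" using k a by (simp add: field_simps)
  have \<rho>1: "\<rho> < 1" "\<rho> > 0" unfolding \<rho>_def using powr_less_mono[OF e r1] r1 by auto
  define C where "C = p/(1-p) / ((1 - \<rho>) * fact (k-1))"
  have Cpos: "C > 0" using p \<rho>1 by (simp add: C_def)
  show ?thesis
  proof (intro exI[of _ C] conjI Cpos allI impI)
    fix n :: nat and t :: real assume n: "n \<ge> 1"
    define M where "M = M_p p n"
    define g where "g = gamma_p p n"
    have g: "g > 0" using n r1 by (simp add: g_def gamma_p_def r_def[symmetric])
    have gM: "g * r^M = real n" using r1 by (simp add: g_def gamma_p_def M_def r_def[symmetric])
    define sj where "sj j = r powr (real (j+M)/\<alpha>) * g powr (1/\<alpha>)" for j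
    define wj where "wj j = p * g / (1-p) * r^(j+M)" for j
    define ratio where "ratio j = p/(1-p) * g powr (1 - k/\<alpha>) * \<rho>^(j+M)" for j
    have sj: "sj j > 0" for j using r1 g by (simp add: sj_def)
    have wj: "wj j > 0" for j using r1 g p by (simp add: wj_def)
    have rat: "wj j / sj j ^ k = ratio j" for j
      unfolding wj_def sj_def ratio_def \<rho>_def using r1 g a by (intro ratio_eq) auto
    have ratpos: "ratio j \<ge> 0" for j using rat[of j] sj[of j] wj[of j] by (metis less_imp_le divide_nonneg_pos zero_less_power)
    have srat: "summable ratio" unfolding ratio_def power_add using \<rho>1
      by (intro summable_mult summable_mult2 summable_geometric) auto
    have sumrat: "(\<Sum>j. ratio j) = p/(1-p) / (1 - \<rho>) * real n powr (1 - k/\<alpha>)"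
    proof -
      have "(\<Sum>j. ratio j) = p/(1-p) * g powr (1 - k/\<alpha>) * \<rho>^M * (\<Sum>j. \<rho>^j)"
        unfolding ratio_def power_add using \<rho>1 by (subst suminf_mult[symmetric]) (auto intro!: summable_geometric simp: algebra_simps)
      also have "(\<Sum>j. \<rho>^j) = 1 / (1 - \<rho>)" using \<rho>1 by (simp add: suminf_geometric)
      finally have S1: "(\<Sum>j. ratio j) = p/(1-p) * (g powr (1 - k/\<alpha>) * \<rho>^M) / (1 - \<rho>)" by simp
      have "g powr (1 - k/\<alpha>) * \<rho>^M = real n powr (1 - k/\<alpha>)"
        using r1 g by (simp add: \<rho>_def powr_power powr_realpow[symmetric] powr_powr gM[symmetric] powr_mult mult.commute)
      with S1 show ?thesis by simp
    qed
    define TT where "TT j y = (exp (\<i> * of_real (y / sj j)) - (\<Sum>i<k. (\<i> * of_real y)^i / (of_real (fact i) * of_real (sj j^i))))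
            * of_real (wj j)" for j y
    define DD where "DD j y = (exp (\<i> * of_real (y / sj j)) - (\<Sum>i<k-1. (\<i> * of_real (y / sj j))^i / fact i)) * (\<i> / of_real (sj j)) * of_real (wj j)" for j y
    have Req: "R_ap \<alpha> p n k = (\<lambda>y. - (\<Sum>j. TT j y))"
      by (rule ext) (simp add: R_ap_def Let_def TT_def sj_def wj_def r_def M_def g_def)
    have TTd: "(TT j has_vector_derivative DD j y) (at y)" for j y
      unfolding TT_def DD_def using sj[of j] k by (intro taylor_term_deriv) auto
    have DDb: "norm (DD j y) \<le> \<bar>y\<bar>^(k-1) / fact (k-1) * ratio j" for j y
    proof -
      have kk: "k - 1 = Suc (k - 2)" using k by simp
      have "norm (exp (\<i> * of_real (y / sj j)) - (\<Sum>i<k-1. (\<i> * of_real (y / sj j))^i / fact i)) \<le> \<bar>y / sj j\<bar>^(k-1) / fact (k-1)"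
        using iexp_approx1[of "y / sj j" "k-2"] unfolding kk lessThan_Suc_atMost .
      then have "norm (exp (\<i> * of_real (y / sj j)) - (\<Sum>i<k-1. (\<i> * of_real (y / sj j))^i / fact i)) * (1 / sj j) * wj j
          \<le> \<bar>y / sj j\<bar>^(k-1) / fact (k-1) * (1 / sj j) * wj j"
        using sj[of j] wj[of j] by (intro mult_right_mono) auto
      moreover have "norm (DD j y) = norm (exp (\<i> * of_real (y / sj j)) - (\<Sum>i<k-1. (\<i> * of_real (y / sj j))^i / fact i)) * (1 / sj j) * wj j"
        unfolding DD_def norm_mult norm_divide using sj[of j] wj[of j] by simp
      ultimately have "norm (DD j y) \<le> \<bar>y / sj j\<bar>^(k-1) / fact (k-1) * (1 / sj j) * wj j" by simp
      also have "\<dots> = \<bar>y\<bar>^(k-1) / fact (k-1) * (wj j / sj j ^ k)"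
        using sj[of j] k by (simp add: power_divide field_simps power_Suc[symmetric] del: power_Suc)
      finally show ?thesis by (simp add: rat)
    qed
    have TTb: "norm (TT j y) \<le> \<bar>y\<bar>^k / fact k * ratio j" for j y
    proof -
      have kk: "k = Suc (k - 1)" using k by simp
      have eq: "(\<i> * of_real y)^i / (of_real (fact i) * of_real (sj j^i)) = (\<i> * of_real (y/sj j))^i / fact i" for i
        using sj[of j] by (simp add: power_divide power_mult_distrib field_simps)
      have "norm (exp (\<i> * of_real (y / sj j)) - (\<Sum>i<k. (\<i> * of_real (y / sj j))^i / fact i)) \<le> \<bar>y / sj j\<bar>^k / fact k"
        using iexp_approx1[of "y / sj j" "k-1"] kk by (metis lessThan_Suc_atMost)
      then have "norm (exp (\<i> * of_real (y / sj j)) - (\<Sum>i<k. (\<i> * of_real (y / sj j))^i / fact i)) * wj j \<le> \<bar>y / sj j\<bar>^k / fact k * wj j"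
        using wj[of j] by (intro mult_right_mono) auto
      moreover have "norm (TT j y) = norm (exp (\<i> * of_real (y / sj j)) - (\<Sum>i<k. (\<i> * of_real (y / sj j))^i / fact i)) * wj j"
        unfolding TT_def eq norm_mult using wj[of j] by simp
      ultimately have "norm (TT j y) \<le> \<bar>y / sj j\<bar>^k / fact k * wj j" by simp
      also have "\<dots> = \<bar>y\<bar>^k / fact k * (wj j / sj j ^ k)"
        using sj[of j] by (simp add: power_divide field_simps)
      finally show ?thesis by (simp add: rat)
    qed
    have sTT: "summable (\<lambda>j. TT j y)" for y
    proof (rule summable_norm_cancel, rule summable_comparison_test)
      show "\<exists>N. \<forall>j\<ge>N. norm (norm (TT j y)) \<le> \<bar>y\<bar>^k / fact k * ratio j" using TTb by auto
      show "summable (\<lambda>j. \<bar>y\<bar>^k / fact k * ratio j)" using srat by (rule summable_mult)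
    qed
    have Rd: "((\<lambda>y. \<Sum>j. TT j y) has_vector_derivative (\<Sum>j. DD j t)) (at t)"
    proof (rule vd_series[where S="{t-1<..<t+1}" and B="\<lambda>j. (\<bar>t\<bar>+1)^(k-1) / fact (k-1) * ratio j"])
      fix j y assume y: "y \<in> {t-1<..<t+1}"
      have "\<bar>y\<bar>^(k-1) \<le> (\<bar>t\<bar>+1)^(k-1)" using y by (intro power_mono) auto
      then show "norm (DD j y) \<le> (\<bar>t\<bar>+1)^(k-1) / fact (k-1) * ratio j"
        using DDb[of j y] ratpos[of j] by (smt (verit, best) divide_right_mono fact_ge_zero mult_right_mono)
    qed (use TTd sTT srat in \<open>auto intro: summable_mult\<close>)
    have "vector_derivative (R_ap \<alpha> p n k) (at t) = - (\<Sum>j. DD j t)"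
      unfolding Req by (intro vector_derivative_at has_vector_derivative_minus Rd)
    then have "norm (vector_derivative (R_ap \<alpha> p n k) (at t)) = norm (\<Sum>j. DD j t)" by simp
    also have "\<dots> \<le> (\<Sum>j. \<bar>t\<bar>^(k-1) / fact (k-1) * ratio j)"
      by (intro norm_suminf_le DDb summable_mult srat)
    also have "\<dots> = \<bar>t\<bar>^(k-1) / fact (k-1) * (p/(1-p) / (1 - \<rho>) * real n powr (1 - k/\<alpha>))"
      using suminf_mult[OF srat, of "\<bar>t\<bar>^(k-1) / fact (k-1)"] sumrat by simp
    also have "real n powr (1 - k/\<alpha>) = 1 / real n powr ((real k - \<alpha>) / \<alpha>)"
    proof -
      have "1 - k/\<alpha> = - ((real k - \<alpha>) / \<alpha>)" using a by (simp add: field_simps)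
      then show ?thesis by (simp add: powr_minus_divide)
    qed
    finally show "norm (vector_derivative (R_ap \<alpha> p n k) (at t)) \<le> C * \<bar>t\<bar> ^ (k - 1) / real n powr ((real k - \<alpha>) / \<alpha>)"
      by (simp add: C_def field_simps)
  qed
qed



lemma part2:
  assumes a: "1 < \<alpha>" and p: "0 < p" "p < 1"
  shows "\<exists>C5>0. \<forall>n t. n \<ge> 1 \<longrightarrow>
               norm (vector_derivative (x_ap \<alpha> p n) (at t)) \<le> C5 * real n powr ((\<alpha> - 1) / \<alpha>)"
proof -
  define r where "r = 1 / (1 - p)"
  define a where "a k = r powr (real (Suc k) / \<alpha>)" for k
  define w where "w k = (1 - p) ^ k * p" for k
  define d where "d k u = exp (\<i> * of_real (u * a k)) * (\<i> * of_real (a k)) * of_real (w k)" for k u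
  define B where "B k = a k * w k" for k
  have r1: "r > 1" using p by (simp add: r_def)
  have apos: "a k > 0" for k using r1 by (simp add: a_def)
  have wpos: "w k > 0" for k using p by (auto simp: w_def less_imp_le)
  define \<rho> where "\<rho> = r powr (1/\<alpha>) * (1 - p)"
  have \<rho>: "\<rho> = (1-p) powr (1 - 1/\<alpha>)"
    using p by (simp add: \<rho>_def r_def powr_divide powr_diff)
  have e0: "0 < 1 - 1/\<alpha>" using a by (simp add: field_simps)
  have \<rho>1: "\<rho> < 1" "\<rho> \<ge> 0" unfolding \<rho> using p powr_less_mono2[OF e0, of "1-p" 1]
    by auto
  have Beq: "B k = r powr (1/\<alpha>) * p * \<rho> ^ k" for k
  proof -
    have "a k = r powr (1/\<alpha>) * (r powr (1/\<alpha>)) ^ k"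
      using r1 by (simp add: a_def powr_realpow[symmetric] powr_powr powr_add[symmetric] add_divide_distrib)
    then show ?thesis by (simp add: B_def w_def \<rho>_def power_mult_distrib)
  qed
  have sB: "summable B" unfolding Beq using \<rho>1
    by (intro summable_mult summable_geometric) auto
  have dbd: "norm (d k u) \<le> B k" for k u
    using apos[of k] wpos[of k] by (simp add: d_def B_def norm_mult)
  have fap: "f_ap \<alpha> p u = (\<Sum>k. exp (\<i> * of_real (u * a k)) * of_real (w k))" for u
    by (simp add: f_ap_def a_def w_def r_def)
  have sf: "summable (\<lambda>k. exp (\<i> * of_real (u * a k)) * of_real (w k))" for u
  proof (rule summable_norm_cancel, rule summable_comparison_test)
    show "\<exists>N. \<forall>n\<ge>N. norm (norm (exp (\<i> * of_real (u * a n)) * of_real (w n))) \<le> (1-p)^n * p"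
      using wpos by (simp add: norm_mult abs_mult[symmetric] del: of_real_diff of_real_mult of_real_power) (auto simp: w_def less_imp_le)
    show "summable (\<lambda>n. (1-p)^n * p)" using p by (intro summable_mult2 summable_geometric) auto
  qed
  have Fd: "(f_ap \<alpha> p has_vector_derivative (\<Sum>k. d k u)) (at u)" for u
  proof -
    have "((\<lambda>y. \<Sum>k. exp (\<i> * of_real (y * a k)) * of_real (w k)) has_vector_derivative (\<Sum>k. d k u)) (at u)"
    proof (rule vd_series[where S=UNIV and B=B])
      fix k y
      have "((\<lambda>z. exp (\<i> * (z * of_real (a k))) * of_real (w k)) has_field_derivative d k y) (at (of_real y))"
        by (auto intro!: derivative_eq_intros simp: d_def)
      from has_vector_derivative_real_field[OF this]
      show "((\<lambda>y. exp (\<i> * of_real (y * a k)) * of_real (w k)) has_vector_derivative d k y) (at y)" by simp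
    qed (use dbd sB sf in auto)
    then show ?thesis by (simp add: fap[abs_def])
  qed
  define K where "K = (\<Sum>k. B k)"
  have Kpos: "K > 0" unfolding K_def
    using sB by (intro suminf_pos) (use apos wpos in \<open>auto simp: B_def\<close>)
  show ?thesis
  proof (intro exI[of _ K] conjI Kpos allI impI)
    fix n :: nat and t :: real assume n: "n \<ge> 1"
    define c where "c = real n powr (1/\<alpha>)"
    have c: "c > 0" using n by (simp add: c_def)
    have "((\<lambda>t. t / c) has_vector_derivative (1/c)) (at t)"
      by (auto intro!: derivative_eq_intros)
    from vector_diff_chain_at[OF this Fd]
    have "((\<lambda>t. f_ap \<alpha> p (t / c)) has_vector_derivative ((1/c) *\<^sub>R (\<Sum>k. d k (t/c)))) (at t)"
      by (simp add: o_def)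
    then have "((\<lambda>t. of_nat n * (f_ap \<alpha> p (t / c) - 1)) has_vector_derivative of_nat n * ((1/c) *\<^sub>R (\<Sum>k. d k (t/c)))) (at t)"
      by (auto intro!: derivative_eq_intros)
    then have "vector_derivative (x_ap \<alpha> p n) (at t) = of_nat n * ((1/c) *\<^sub>R (\<Sum>k. d k (t/c)))"
      by (intro vector_derivative_at) (simp add: x_ap_def[abs_def] c_def)
    also have "norm \<dots> = real n / c * norm (\<Sum>k. d k (t/c))"
      using c by (simp add: norm_mult)
    also have "\<dots> \<le> real n / c * K"
      unfolding K_def using c by (intro mult_left_mono norm_suminf_le dbd sB) auto
    also have "real n / c = real n powr ((\<alpha> - 1) / \<alpha>)"
      using n a by (simp add: c_def powr_diff diff_divide_distrib)
    finally show "norm (vector_derivative (x_ap \<alpha> p n) (at t)) \<le> K * real n powr ((\<alpha> - 1) / \<alpha>)"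
      by (simp add: mult.commute)
  qed
qed
theorem lemma11:
  shows "(\<forall>k \<alpha> p. k \<ge> 2 \<and> 1 < \<alpha> \<and> \<alpha> < 2 \<and> 0 < p \<and> p < 1 \<longrightarrow>
            (\<exists>C>0. \<forall>n t. n \<ge> 1 \<longrightarrow>
               norm (vector_derivative (R_ap \<alpha> p n k) (at t))
                 \<le> C * \<bar>t\<bar> ^ (k - 1) / real n powr ((real k - \<alpha>) / \<alpha>)))
       \<and> (\<forall>\<alpha> p C2. 1 < \<alpha> \<and> \<alpha> < 2 \<and> 0 < p \<and> p < 1 \<and> C2 > 0 \<and>
            (\<forall>n t. n \<ge> 1 \<and> \<bar>t\<bar> \<le> C2 * real n powr (1 / \<alpha>) \<longrightarrow>
               norm (x_ap \<alpha> p n t) / real n \<le> 1 / 2) \<longrightarrow>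
            (\<exists>C5>0. \<forall>n t. n \<ge> 1 \<and> \<bar>t\<bar> \<le> C2 * real n powr (1 / \<alpha>) \<longrightarrow>
               norm (vector_derivative (x_ap \<alpha> p n) (at t))
                 \<le> C5 * real n powr ((\<alpha> - 1) / \<alpha>)))"
  proof (intro conjI allI impI)
  fix k :: nat and \<alpha> p :: real
  assume "2 \<le> k \<and> 1 < \<alpha> \<and> \<alpha> < 2 \<and> 0 < p \<and> p < 1"
  then show "\<exists>C>0. \<forall>n t. n \<ge> 1 \<longrightarrow>
               norm (vector_derivative (R_ap \<alpha> p n k) (at t))
                 \<le> C * \<bar>t\<bar> ^ (k - 1) / real n powr ((real k - \<alpha>) / \<alpha>)"
    using part1 by blast
next
  fix \<alpha> p C2 :: real
  assume H: "1 < \<alpha> \<and> \<alpha> < 2 \<and> 0 < p \<and> p < 1 \<and> C2 > 0 \<and>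
            (\<forall>n t. n \<ge> 1 \<and> \<bar>t\<bar> \<le> C2 * real n powr (1 / \<alpha>) \<longrightarrow>
               norm (x_ap \<alpha> p n t) / real n \<le> 1 / 2)"
  then obtain C5 where "C5 > 0" "\<forall>n t. n \<ge> 1 \<longrightarrow>
               norm (vector_derivative (x_ap \<alpha> p n) (at t)) \<le> C5 * real n powr ((\<alpha> - 1) / \<alpha>)"
    using part2[of \<alpha> p] by blast
  then show "\<exists>C5>0. \<forall>n t. n \<ge> 1 \<and> \<bar>t\<bar> \<le> C2 * real n powr (1 / \<alpha>) \<longrightarrow>
               norm (vector_derivative (x_ap \<alpha> p n) (at t))
                 \<le> C5 * real n powr ((\<alpha> - 1) / \<alpha>)" by blast
qed

end
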